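(* For any $R>0$ and $\varphi_0>0$ there exists a unique smooth solution $\varphi(r)$ on $[R,\infty)$ of the problem $$\varphi'(r)=(1+\varphi(r)^2)\big(2-\varphi(r)\coth r\big),\qquad \varphi(R)=\varphi_0.$$ Moreover, $\lim_{r\to\infty}\varphi(r)=2$.
   Context: (This ODE is the equation satisfied by $\varphi=f'$ when the rotational graph $z=f(r)$, $r$ being the hyperbolic distance to a fixed point of $\mathbb{H}^2$, is a translating soliton in $\mathbb{H}^2\times\mathbb{R}$, i.e. has mean curvature equal to its angle function.) *)

theory Defs
  imports "HOL-Analysis.Analysis"
begin

definition coth :: "real \<Rightarrow> real" where
  "coth r = cosh r / sinh r"

text \<open>C-infinity on a set S (one-sided derivatives at boundary points):
  there is a sequence of functions, starting with f, each being the derivative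
  of the previous one on S.\<close>
definition smooth_on_real :: "real set \<Rightarrow> (real \<Rightarrow> real) \<Rightarrow> bool" where
  "smooth_on_real S f \<longleftrightarrow>
     (\<exists>D :: nat \<Rightarrow> real \<Rightarrow> real. D 0 = f \<and>
        (\<forall>k. \<forall>x\<in>S. (D k has_real_derivative D (Suc k) x) (at x within S)))"

definition translator_ivp :: "real \<Rightarrow> real \<Rightarrow> (real \<Rightarrow> real) \<Rightarrow> bool" where
  "translator_ivp R \<phi>0 \<phi> \<longleftrightarrow>
     \<phi> R = \<phi>0 \<and>
     (\<forall>r\<in>{R..}. (\<phi> has_real_derivative
         (1 + (\<phi> r)\<^sup>2) * (2 - \<phi> r * coth r)) (at r within {R..}))"

end

theory Submission
  imports Defs "HOL-Real_Asymp.Real_Asymp"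
begin


lemma coth_ge1: "r > 0 \<Longrightarrow> 1 \<le> coth r"
  unfolding coth_def using sinh_le_cosh_real[of r] by (simp add: field_simps)

lemma coth_pos: "r > 0 \<Longrightarrow> 0 \<le> coth r"
  using coth_ge1 by fastforce

lemma coth_mono: assumes "0 < R" "R \<le> r" shows "coth r \<le> coth R"
proof -
  have "sinh (r - R) \<ge> 0" using assms by simp
  hence "cosh r * sinh R \<le> cosh R * sinh r" by (simp add: sinh_diff mult.commute)
  thus ?thesis using assms unfolding coth_def by (simp add: field_simps)
qed

lemma coth_deriv: "r > 0 \<Longrightarrow> (coth has_real_derivative (1 - (coth r)\<^sup>2)) (at r)"
proof -
  assume r: "r > 0"
  have "((\<lambda>r. cosh r / sinh r) has_real_derivative (sinh r * sinh r - cosh r * cosh r) / (sinh r)\<^sup>2) (at r)"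
    using r by (auto intro!: derivative_eq_intros simp: power2_eq_square)
  moreover have "(sinh r * sinh r - cosh r * cosh r) / (sinh r)\<^sup>2 = 1 - (coth r)\<^sup>2"
    using r hyperbolic_pythagoras[of r] unfolding coth_def by (simp add: field_simps power2_eq_square)
  ultimately show ?thesis unfolding coth_def[abs_def] by simp
qed

lemma coth_cont: "r > 0 \<Longrightarrow> isCont coth r"
  using coth_deriv DERIV_isCont by blast

lemma coth_lim: "(coth \<longlongrightarrow> 1) at_top"
  unfolding coth_def[abs_def] cosh_field_def sinh_field_def by real_asymp



datatype tm = Cst real | Vc | Vy | Add tm tm | Mul tm tm

fun evt :: "tm \<Rightarrow> real \<Rightarrow> real \<Rightarrow> real" where
  "evt (Cst a) c y = a"
| "evt Vc c y = c"
| "evt Vy c y = y"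
| "evt (Add p q) c y = evt p c y + evt q c y"
| "evt (Mul p q) c y = evt p c y * evt q c y"

definition Ft :: tm where
  "Ft = Mul (Add (Cst 1) (Mul Vy Vy)) (Add (Cst 2) (Mul (Cst (-1)) (Mul Vy Vc)))"

fun dt :: "tm \<Rightarrow> tm" where
  "dt (Cst a) = Cst 0"
| "dt Vc = Add (Cst 1) (Mul (Cst (-1)) (Mul Vc Vc))"
| "dt Vy = Ft"
| "dt (Add p q) = Add (dt p) (dt q)"
| "dt (Mul p q) = Add (Mul (dt p) q) (Mul p (dt q))"

lemma evt_Ft: "evt Ft c y = (1 + y\<^sup>2) * (2 - y * c)"
  by (simp add: Ft_def power2_eq_square)

lemma dt_deriv:
  assumes S: "S \<subseteq> {0<..}" and r: "r \<in> S"
    and der: "\<And>r. r \<in> S \<Longrightarrow> (\<phi> has_real_derivative evt Ft (coth r) (\<phi> r)) (at r within S)"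
  shows "((\<lambda>r. evt p (coth r) (\<phi> r)) has_real_derivative evt (dt p) (coth r) (\<phi> r)) (at r within S)"
proof (induction p)
  case (Cst x)
  then show ?case by simp
next
  case Vc
  have "r > 0" using S r by auto
  from has_field_derivative_at_within[OF coth_deriv[OF this]]
  show ?case by (simp add: power2_eq_square)
next
  case Vy
  then show ?case using der[OF r] by simp
next
  case (Add p1 p2)
  then show ?case by (auto intro!: derivative_eq_intros)
next
  case (Mul p1 p2)
  then show ?case by (auto intro!: derivative_eq_intros)
qed

lemma smooth_from_ode:
  assumes "0 < R"
    and der: "\<And>r. r \<in> {R..} \<Longrightarrow> (\<phi> has_real_derivative (1 + (\<phi> r)\<^sup>2) * (2 - \<phi> r * coth r)) (at r within {R..})"
  shows "smooth_on_real {R..} \<phi>"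
  unfolding smooth_on_real_def
proof (intro exI[of _ "\<lambda>k r. evt ((dt ^^ k) Vy) (coth r) (\<phi> r)"] conjI allI ballI)
  show "(\<lambda>r. evt ((dt ^^ 0) Vy) (coth r) (\<phi> r)) = \<phi>" by simp
next
  fix k r assume r: "r \<in> {R..}"
  have "((\<lambda>r. evt ((dt ^^ k) Vy) (coth r) (\<phi> r)) has_real_derivative evt (dt ((dt ^^ k) Vy)) (coth r) (\<phi> r)) (at r within {R..})"
    by (rule dt_deriv[OF _ r]) (use assms in \<open>auto simp: evt_Ft\<close>)
  thus "((\<lambda>r. evt ((dt ^^ k) Vy) (coth r) (\<phi> r)) has_real_derivative evt ((dt ^^ Suc k) Vy) (coth r) (\<phi> r)) (at r within {R..})"
    by simp
qed



lemma cont_from_deriv: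
  assumes "\<And>t. t \<ge> R \<Longrightarrow> (x has_real_derivative D t) (at t within {R..})"
  shows "continuous_on {R..T} x"
proof -
  have "continuous_on {R..} x"
    unfolding continuous_on_eq_continuous_within
    using assms DERIV_continuous by blast
  thus ?thesis by (rule continuous_on_subset) auto
qed

lemma at_interior_R: "t > R \<Longrightarrow> at t within {R..} = at (t::real)"
  by (rule at_within_interior) simp

lemma stay_lower:
  fixes x :: "real \<Rightarrow> real"
  assumes der: "\<And>t. t \<ge> R \<Longrightarrow> (x has_real_derivative D t) (at t within {R..})"
    and a: "a \<le> x R"
    and pos: "\<And>t. t \<ge> R \<Longrightarrow> x t < a \<Longrightarrow> D t > 0"
    and t: "t \<ge> R"
  shows "a \<le> x t"
proof (rule ccontr)
  assume "\<not> a \<le> x t"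
  hence xt: "x t < a" by simp
  have "continuous_on {R..t} x" by (rule cont_from_deriv[OF der])
  then obtain u where u: "u \<in> {R..t}" "\<And>s. s \<in> {R..t} \<Longrightarrow> x u \<le> x s"
    using continuous_attains_inf[of "{R..t}" x] t by auto
  have xu: "x u < a" using u(2)[of t] t xt by simp
  have "u \<noteq> R" using xu a by auto
  hence uR: "u > R" using u(1) by simp
  have "DERIV x u :> D u" using der[of u] uR at_interior_R[OF uR] by simp
  moreover have "D u > 0" using pos[of u] uR xu by simp
  ultimately obtain d where d: "d > 0" "\<And>h. h > 0 \<Longrightarrow> h < d \<Longrightarrow> x (u - h) < x u"
    using DERIV_pos_inc_left by blast
  define h where "h = min (d/2) ((u-R)/2)"
  have h: "h > 0" "h < d" using d uR by (auto simp: h_def)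
  have "h \<le> (u-R)/2" unfolding h_def by (rule min.cobounded2)
  hence "u - h \<in> {R..t}" using u(1) uR h by auto
  hence "x u \<le> x (u - h)" by (rule u(2))
  with d(2)[OF h] show False by simp
qed

lemma stay_upper:
  fixes x :: "real \<Rightarrow> real"
  assumes der: "\<And>t. t \<ge> R \<Longrightarrow> (x has_real_derivative D t) (at t within {R..})"
    and b: "x R \<le> b"
    and neg: "\<And>t. t \<ge> R \<Longrightarrow> x t > b \<Longrightarrow> D t < 0"
    and t: "t \<ge> R"
  shows "x t \<le> b"
proof -
  have "-b \<le> - x t"
    by (rule stay_lower[where x="\<lambda>t. - x t" and D="\<lambda>t. - D t"])
       (use der b neg t in \<open>auto intro: DERIV_minus\<close>)
  thus ?thesis by simp
qed

lemma trap_upper: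
  fixes x :: "real \<Rightarrow> real"
  assumes der: "\<And>t. t \<ge> rs \<Longrightarrow> (x has_real_derivative D t) (at t)"
    and dn: "\<And>t. t \<ge> rs \<Longrightarrow> x t \<ge> \<theta> \<Longrightarrow> D t \<le> -\<eta>"
    and eta: "\<eta> > 0"
    and lo: "\<And>t. t \<ge> rs \<Longrightarrow> x t \<ge> lo"
  shows "\<exists>r1. \<forall>t\<ge>r1. x t \<le> \<theta>"
proof -
  have "\<exists>t1\<ge>rs. x t1 < \<theta>"
  proof (rule ccontr)
    assume "\<not> (\<exists>t1\<ge>rs. x t1 < \<theta>)"
    hence ge: "\<And>t. t \<ge> rs \<Longrightarrow> x t \<ge> \<theta>" by force
    define T where "T = rs + \<bar>x rs - lo\<bar> / \<eta> + 1"
    have "0 \<le> \<bar>x rs - lo\<bar> / \<eta>" using eta by simp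
    hence rT: "rs < T" by (simp add: T_def)
    obtain z where z: "rs < z" "z < T" "x T - x rs = (T - rs) * D z"
      using MVT2[OF rT, of x D] der by force
    have "D z \<le> -\<eta>" using dn[of z] ge[of z] z by simp
    hence "(T - rs) * D z \<le> (T - rs) * (-\<eta>)" using rT by (intro mult_left_mono) auto
    also have "\<dots> = -(\<bar>x rs - lo\<bar> + \<eta>)" using eta by (simp add: T_def field_simps)
    finally have "x T < lo" using z(3) eta by linarith
    with lo[of T] rT show False by simp
  qed
  then obtain t1 where t1: "t1 \<ge> rs" "x t1 < \<theta>" by blast
  have "x t \<le> \<theta>" if t: "t \<ge> t1" for t
  proof (rule ccontr)
    assume "\<not> x t \<le> \<theta>"
    hence xt: "x t > \<theta>" by simp
    have "continuous_on {t1..t} x"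
      unfolding continuous_on_eq_continuous_within
      using der t1 DERIV_continuous by (meson atLeastAtMost_iff continuous_at_imp_continuous_within order_trans DERIV_isCont)
    then obtain u where u: "u \<in> {t1..t}" "\<And>s. s \<in> {t1..t} \<Longrightarrow> x s \<le> x u"
      using continuous_attains_sup[of "{t1..t}" x] t by auto
    have xu: "x u > \<theta>" using u(2)[of t] t xt by simp
    have "u \<noteq> t1" using xu t1 by auto
    hence ut: "u > t1" using u(1) by simp
    have "DERIV x u :> D u" using der[of u] ut t1 by simp
    moreover have "D u < 0" using dn[of u] ut t1 xu eta by simp
    ultimately obtain d where d: "d > 0" "\<And>h. h > 0 \<Longrightarrow> h < d \<Longrightarrow> x u < x (u - h)"
      using DERIV_neg_dec_left by blast
    define h where "h = min (d/2) ((u-t1)/2)"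
    have h: "h > 0" "h < d" using d ut by (auto simp: h_def)
    have "h \<le> (u-t1)/2" unfolding h_def by (rule min.cobounded2)
    hence "u - h \<in> {t1..t}" using u(1) ut h by auto
    hence "x (u - h) \<le> x u" by (rule u(2))
    with d(2)[OF h] show False by simp
  qed
  thus ?thesis by blast
qed

lemma trap_lower:
  fixes x :: "real \<Rightarrow> real"
  assumes der: "\<And>t. t \<ge> rs \<Longrightarrow> (x has_real_derivative D t) (at t)"
    and up: "\<And>t. t \<ge> rs \<Longrightarrow> x t \<le> \<theta> \<Longrightarrow> D t \<ge> \<eta>"
    and eta: "\<eta> > 0"
    and hi: "\<And>t. t \<ge> rs \<Longrightarrow> x t \<le> hi"
  shows "\<exists>r1. \<forall>t\<ge>r1. x t \<ge> \<theta>"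
proof -
  have "\<exists>r1. \<forall>t\<ge>r1. - x t \<le> - \<theta>"
    by (rule trap_upper[where D="\<lambda>t. - D t" and \<eta>=\<eta> and lo="-hi"])
       (use der up eta hi in \<open>auto intro: DERIV_minus\<close>)
  thus ?thesis by simp
qed

lemma uniq_gronwall:
  fixes x y :: "real \<Rightarrow> real"
  assumes dx: "\<And>t. t \<ge> R \<Longrightarrow> (x has_real_derivative Dx t) (at t within {R..})"
    and dy: "\<And>t. t \<ge> R \<Longrightarrow> (y has_real_derivative Dy t) (at t within {R..})"
    and lip: "\<And>t. t \<ge> R \<Longrightarrow> \<bar>Dx t - Dy t\<bar> \<le> L * \<bar>x t - y t\<bar>"
    and L: "L \<ge> 0" and init: "x R = y R" and t: "t \<ge> R"
  shows "x t = y t"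
proof (cases "t = R")
  case True then show ?thesis using init by simp
next
  case False
  hence tR: "R < t" using t by simp
  define h where "h s = (x s - y s)\<^sup>2 * exp (-(2*L) * (s - R))" for s
  define h' where "h' s = (2 * (x s - y s) * (Dx s - Dy s)) * exp (-(2*L) * (s - R))
       + (x s - y s)\<^sup>2 * (exp (-(2*L) * (s - R)) * (-(2*L)))" for s
  have hd: "(h has_real_derivative h' s) (at s within {R..})" if "s \<ge> R" for s
    unfolding h_def[abs_def] h'_def
    by (rule derivative_eq_intros refl dx dy that)+ (simp add: algebra_simps)
  have "\<exists>z\<in>{R<..<t}. h t - h R = (\<lambda>d. h' z * d) (t - R)"
  proof (rule mvt_simple[OF tR])
    fix s assume "R \<le> s" "s \<le> t"
    thus "(h has_derivative (\<lambda>d. h' s * d)) (at s within {R..t})"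
      using DERIV_subset[OF hd[of s], of "{R..t}"]
      by (auto simp: has_field_derivative_def)
  qed
  then obtain z where z: "z \<in> {R<..<t}" "h t - h R = h' z * (t - R)" by auto
  have "(x z - y z) * (Dx z - Dy z) \<le> \<bar>x z - y z\<bar> * \<bar>Dx z - Dy z\<bar>"
    by (metis abs_ge_self abs_mult)
  also have "\<dots> \<le> \<bar>x z - y z\<bar> * (L * \<bar>x z - y z\<bar>)"
    using lip[of z] z by (intro mult_left_mono) auto
  also have "\<dots> = L * (x z - y z)\<^sup>2" by (simp add: power2_eq_square)
  finally have q: "2 * ((x z - y z) * (Dx z - Dy z)) - 2 * L * (x z - y z)\<^sup>2 \<le> 0" by linarith
  have "h' z = exp (-(2*L) * (z - R)) * (2 * ((x z - y z) * (Dx z - Dy z)) - 2 * L * (x z - y z)\<^sup>2)"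
    unfolding h'_def by (simp add: algebra_simps)
  also have "\<dots> \<le> 0" using q by (intro mult_nonneg_nonpos) auto
  finally have "h' z \<le> 0" .
  hence "h' z * (t - R) \<le> 0" using tR by (simp add: mult_nonpos_nonneg)
  moreover have "h R = 0" using init by (simp add: h_def)
  ultimately have "h t \<le> 0" using z(2) by linarith
  hence "(x t - y t)\<^sup>2 * exp (-(2*L) * (t - R)) \<le> 0" by (simp add: h_def)
  hence "(x t - y t)\<^sup>2 \<le> 0" by (simp add: mult_le_0_iff)
  hence "(x t - y t)\<^sup>2 = 0" by (meson antisym zero_le_power2)
  thus ?thesis by simp
qed



lemma int_cont_R:
  fixes g :: "real \<Rightarrow> real"
  assumes "continuous_on UNIV g"
  shows "continuous_on {a..} (\<lambda>x. integral {a..x} g)"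
  unfolding continuous_on_eq_continuous_within
proof
  fix x assume x: "x \<in> {a..}"
  have "continuous_on {a..x+1} (\<lambda>x. integral {a..x} g)"
    by (rule indefinite_integral_continuous_1, rule integrable_continuous_interval,
        rule continuous_on_subset[OF assms]) auto
  hence "continuous (at x within {a..x+1}) (\<lambda>x. integral {a..x} g)"
    using x by (simp add: continuous_on_eq_continuous_within)
  moreover have "at x within {a..x+1} = at x within {a..}"
    by (rule at_within_nhd[where S="{..<x+1}"]) auto
  ultimately show "continuous (at x within {a..}) (\<lambda>x. integral {a..x} g)" by simp
qed

lemma int_deriv_R:
  fixes g :: "real \<Rightarrow> real"
  assumes "continuous_on UNIV g" "x \<ge> a"
  shows "((\<lambda>x. integral {a..x} g) has_real_derivative g x) (at x within {a..})"
proof -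
  have "((\<lambda>x. integral {a..x} g) has_real_derivative g x) (at x within {a..x+1})"
    by (rule integral_has_real_derivative, rule continuous_on_subset[OF assms(1)]) (use assms in auto)
  moreover have "at x within {a..x+1} = at x within {a..}"
    by (rule at_within_nhd[where S="{..<x+1}"]) auto
  ultimately show ?thesis by simp
qed

lemma exp_int:
  fixes c K :: real
  assumes "K > 0" "R \<le> v"
  shows "integral {R..v} (\<lambda>s. c * exp (K * (s - R))) = c * (exp (K * (v - R)) - 1) / K"
proof -
  have "((\<lambda>s. c * exp (K * (s - R))) has_integral
        ((\<lambda>s. c * exp (K * (s - R)) / K) v - (\<lambda>s. c * exp (K * (s - R)) / K) R)) {R..v}"
  proof (rule fundamental_theorem_of_calculus[OF assms(2)])
    fix x assume "x \<in> {R..v}"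
    show "((\<lambda>s. c * exp (K * (s - R)) / K) has_vector_derivative c * exp (K * (x - R))) (at x within {R..v})"
      unfolding has_real_derivative_iff_has_vector_derivative[symmetric]
      using assms by (auto intro!: derivative_eq_intros)
  qed
  hence "integral {R..v} (\<lambda>s. c * exp (K * (s - R))) = c * exp (K * (v - R)) / K - c * exp (K * (R - R)) / K"
    by (rule integral_unique)
  also have "\<dots> = c * (exp (K * (v - R)) - 1) / K"
    by (simp add: right_diff_distrib diff_divide_distrib)
  finally show ?thesis .
qed

lemma exists_sol:
  fixes G :: "real \<Rightarrow> real \<Rightarrow> real" and R y0 L M :: real
  assumes contG: "\<And>x. continuous_on UNIV x \<Longrightarrow> continuous_on UNIV (\<lambda>s. G s (x s))"
    and lip: "\<And>s y z. \<bar>G s y - G s z\<bar> \<le> L * \<bar>y - z\<bar>"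
    and L: "L > 0"
    and bnd: "\<And>s y. \<bar>G s y\<bar> \<le> M"
  shows "\<exists>x. x R = y0 \<and> (\<forall>t\<ge>R. (x has_real_derivative G t (x t)) (at t within {R..}))"
proof -
  define K where "K = 2 * L"
  have K: "K > 0" using L by (simp add: K_def)
  define gf where "gf w s = G s (exp (K * (s - R)) * w s)" for w :: "real \<Rightarrow> real" and s
  define Pf where "Pf w t = exp (-K * (max R t - R)) * (y0 + integral {R..max R t} (gf w))"
    for w :: "real \<Rightarrow> real" and t
  have gcont: "continuous_on UNIV (gf w)" if "continuous_on UNIV w" for w
    unfolding gf_def by (rule contG) (auto intro!: continuous_intros that)
  have M0: "M \<ge> 0" using bnd[of 0 0] by simp
  have Pin: "Pf w \<in> bcontfun" if wc: "continuous_on UNIV w" for w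
  proof (rule bcontfun_normI)
    have c1: "continuous_on {R..} (\<lambda>x. integral {R..x} (gf w))"
      by (rule int_cont_R[OF gcont[OF wc]])
    have c2: "continuous_on UNIV (\<lambda>t. integral {R..max R t} (gf w))"
      by (rule continuous_on_compose2[OF c1, of UNIV "\<lambda>t. max R t"]) (auto intro!: continuous_intros)
    show "continuous_on UNIV (Pf w)"
      unfolding Pf_def[abs_def] by (auto intro!: continuous_intros c2)
  next
    fix t
    define u where "u = max R t - R"
    have u: "u \<ge> 0" by (simp add: u_def)
    have "\<bar>integral {R..max R t} (gf w)\<bar> \<le> M * (max R t - R)"
      using integral_bound[of R "max R t" "gf w" M] gcont[OF wc] bnd
      by (auto simp: gf_def intro: continuous_on_subset)
    hence ib: "\<bar>integral {R..max R t} (gf w)\<bar> \<le> M * u" by (simp add: u_def)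
    have e: "exp (-K * u) > 0" "exp (-K*u) \<le> 1" using K u by auto
    have ku: "K * u \<le> exp (K * u)" using exp_ge_add_one_self[of "K*u"] by linarith
    have "u * exp (-K * u) \<le> 1 / K"
    proof -
      have "K * u * exp (-K*u) \<le> exp (K*u) * exp (-K*u)"
        using ku e by (intro mult_right_mono) auto
      also have "\<dots> = 1" by (simp add: exp_add[symmetric])
      finally show ?thesis using K by (simp add: field_simps)
    qed
    have "\<bar>Pf w t\<bar> = exp (-K * u) * \<bar>y0 + integral {R..max R t} (gf w)\<bar>"
      by (simp add: Pf_def u_def abs_mult)
    also have "\<dots> \<le> exp (-K * u) * (\<bar>y0\<bar> + M * u)"
      using ib e by (intro mult_left_mono) auto
    also have "\<dots> = exp (-K*u) * \<bar>y0\<bar> + M * (u * exp (-K*u))" by (simp add: algebra_simps)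
    also have "\<dots> \<le> 1 * \<bar>y0\<bar> + M * (1/K)"
    proof (rule add_mono)
      show "exp (-K*u) * \<bar>y0\<bar> \<le> 1 * \<bar>y0\<bar>" using e by (intro mult_right_mono) auto
      show "M * (u * exp (-K*u)) \<le> M * (1/K)" using M0 \<open>u * exp (-K * u) \<le> 1 / K\<close>
        by (rule mult_left_mono[rotated])
    qed
    finally show "norm (Pf w t) \<le> \<bar>y0\<bar> + M / K" by simp
  qed
  define P where "P w = Bcontfun (Pf (apply_bcontfun w))" for w :: "real \<Rightarrow>\<^sub>C real"
  have Papp: "apply_bcontfun (P w) = Pf (apply_bcontfun w)" for w
    unfolding P_def by (rule Bcontfun_inverse[OF Pin]) simp
  have contr: "dist (P w1) (P w2) \<le> (1/2) * dist w1 w2" for w1 w2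
  proof (rule dist_bound)
    fix t
    define d where "d = dist w1 w2"
    define v where "v = max R t"
    have v: "R \<le> v" by (simp add: v_def)
    have gi: "gf (apply_bcontfun w) integrable_on {R..v}" for w
      by (rule integrable_continuous_interval, rule continuous_on_subset[OF gcont]) auto
    have pt: "\<bar>gf w1 s - gf w2 s\<bar> \<le> L * d * exp (K * (s - R))" for s
    proof -
      have "\<bar>gf w1 s - gf w2 s\<bar> \<le> L * \<bar>exp (K * (s - R)) * w1 s - exp (K * (s - R)) * w2 s\<bar>"
        unfolding gf_def by (rule lip)
      also have "\<dots> = L * (exp (K * (s - R)) * \<bar>w1 s - w2 s\<bar>)"
        by (simp add: abs_mult right_diff_distrib[symmetric])
      also have "\<dots> \<le> L * (exp (K * (s - R)) * d)"
        using dist_bounded[of w1 s w2] L unfolding d_def dist_real_def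
        by (intro mult_left_mono) auto
      finally show ?thesis by (simp add: algebra_simps)
    qed
    have "\<bar>integral {R..v} (gf w1) - integral {R..v} (gf w2)\<bar>
          = \<bar>integral {R..v} (\<lambda>s. gf w1 s - gf w2 s)\<bar>"
      by (simp add: integral_diff[OF gi gi])
    also have "\<dots> \<le> integral {R..v} (\<lambda>s. L * d * exp (K * (s - R)))"
    proof -
      have i1: "(\<lambda>s. gf w1 s - gf w2 s) integrable_on {R..v}" by (rule integrable_diff[OF gi gi])
      have i2: "(\<lambda>s. L * d * exp (K * (s - R))) integrable_on {R..v}"
        by (rule integrable_continuous_interval) (auto intro!: continuous_intros)
      show ?thesis using integral_norm_bound_integral[OF i1 i2] pt by simp
    qed
    also have "\<dots> = L * d * (exp (K * (v - R)) - 1) / K" by (rule exp_int[OF K v])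
    finally have ib: "\<bar>integral {R..v} (gf w1) - integral {R..v} (gf w2)\<bar> \<le> L * d * (exp (K * (v - R)) - 1) / K" .
    have d0: "d \<ge> 0" by (simp add: d_def)
    have "dist (P w1 t) (P w2 t) = exp (-K * (v - R)) * \<bar>integral {R..v} (gf w1) - integral {R..v} (gf w2)\<bar>"
      by (simp add: Papp Pf_def v_def dist_real_def abs_mult right_diff_distrib[symmetric])
    also have "\<dots> \<le> exp (-K * (v - R)) * (L * d * (exp (K * (v - R)) - 1) / K)"
      using ib by (intro mult_left_mono) auto
    also have "\<dots> = (L * d / K) * (1 - exp (-K * (v - R)))"
      by (simp add: field_simps exp_add[symmetric])
    also have "\<dots> \<le> (L * d / K) * 1"
      using L d0 K by (intro mult_left_mono) auto
    also have "\<dots> = (1/2) * d" using L by (simp add: K_def)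
    finally show "dist (P w1 t) (P w2 t) \<le> (1/2) * dist w1 w2" by (simp add: d_def)
  qed
  obtain w where w: "P w = w"
    using banach_fix_type[of "1/2" P] contr by auto
  define x where "x s = exp (K * (s - R)) * w s" for s
  have gfx: "gf (apply_bcontfun w) = (\<lambda>s. G s (x s))" by (simp add: gf_def[abs_def] x_def)
  have xeq: "x t = y0 + integral {R..t} (\<lambda>s. G s (x s))" if "t \<ge> R" for t
  proof -
    have "w t = Pf w t" using arg_cong[OF w, of "\<lambda>f. apply_bcontfun f t"] Papp by simp
    hence "x t = exp (K * (t - R)) * (exp (-K * (t - R)) * (y0 + integral {R..t} (\<lambda>s. G s (x s))))"
      using that by (simp add: x_def Pf_def gfx max_def)
    also have "\<dots> = y0 + integral {R..t} (\<lambda>s. G s (x s))"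
      by (simp add: mult.assoc[symmetric] exp_add[symmetric])
    finally show ?thesis .
  qed
  have xc: "continuous_on UNIV (\<lambda>s. G s (x s))"
    unfolding gfx[symmetric] by (rule gcont) simp
  show ?thesis
  proof (intro exI[of _ x] conjI allI impI)
    show "x R = y0" using xeq[of R] by simp
  next
    fix t assume t: "R \<le> t"
    have "((\<lambda>t. y0 + integral {R..t} (\<lambda>s. G s (x s))) has_real_derivative G t (x t)) (at t within {R..})"
      using int_deriv_R[OF xc t] by (auto intro!: derivative_eq_intros)
    thus "(x has_real_derivative G t (x t)) (at t within {R..})"
      by (rule has_field_derivative_transform_within[where d=1]) (use t xeq in auto)
  qed
qed



lemma poly_lip:
  fixes u v b c C :: real
  assumes "0 \<le> u" "u \<le> b" "0 \<le> v" "v \<le> b" "0 \<le> c" "c \<le> C"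
  shows "\<bar>(1 + u\<^sup>2) * (2 - u * c) - (1 + v\<^sup>2) * (2 - v * c)\<bar> \<le> (4 * b + C * (1 + 3 * b\<^sup>2)) * \<bar>u - v\<bar>"
proof -
  define Q where "Q = 2 * (u + v) - c * (1 + u\<^sup>2 + u * v + v\<^sup>2)"
  have eq: "(1 + u\<^sup>2) * (2 - u * c) - (1 + v\<^sup>2) * (2 - v * c) = (u - v) * Q"
    unfolding Q_def by (simp add: algebra_simps power2_eq_square)
  have b0: "0 \<le> b" using assms by simp
  have "u\<^sup>2 \<le> b\<^sup>2" "v\<^sup>2 \<le> b\<^sup>2" using assms by (auto intro: power_mono)
  moreover have "u * v \<le> b * b" using assms by (intro mult_mono) auto
  ultimately have s: "1 + u\<^sup>2 + u * v + v\<^sup>2 \<le> 1 + 3 * b\<^sup>2" by (simp add: power2_eq_square)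
  have q1: "0 \<le> c * (1 + u\<^sup>2 + u * v + v\<^sup>2)" using assms by simp
  have q2: "c * (1 + u\<^sup>2 + u * v + v\<^sup>2) \<le> C * (1 + 3 * b\<^sup>2)"
    using assms s q1 by (intro mult_mono) auto
  have C0: "0 \<le> C * (1 + 3 * b\<^sup>2)" using assms by simp
  have "\<bar>Q\<bar> \<le> 4 * b + C * (1 + 3 * b\<^sup>2)" 
  proof -
    define P where "P = c * (1 + u\<^sup>2 + u * v + v\<^sup>2)"
    define T where "T = C * (1 + 3 * b\<^sup>2)"
    have "0 \<le> P" "P \<le> T" "0 \<le> T" using q1 q2 C0 by (auto simp: P_def T_def)
    hence "\<bar>2 * (u + v) - P\<bar> \<le> 4 * b + T" using assms by (simp add: abs_le_iff)
    thus ?thesis by (simp add: Q_def P_def T_def)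
  qed
  hence "\<bar>u - v\<bar> * \<bar>Q\<bar> \<le> \<bar>u - v\<bar> * (4 * b + C * (1 + 3 * b\<^sup>2))" by (intro mult_left_mono) auto
  hence "\<bar>(u - v) * Q\<bar> \<le> (4 * b + C * (1 + 3 * b\<^sup>2)) * \<bar>u - v\<bar>"
    by (simp only: abs_mult mult.commute)
  thus ?thesis by (simp only: eq)
qed

lemma poly_bnd:
  fixes u b c C :: real
  assumes "0 \<le> u" "u \<le> b" "0 \<le> c" "c \<le> C"
  shows "\<bar>(1 + u\<^sup>2) * (2 - u * c)\<bar> \<le> (1 + b\<^sup>2) * (2 + b * C)"
proof -
  have "u * c \<le> b * C" using assms by (intro mult_mono) auto
  moreover have "0 \<le> u * c" using assms by simp
  ultimately have "\<bar>2 - u * c\<bar> \<le> 2 + b * C" unfolding abs_le_iff by (intro conjI; linarith)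
  moreover have "1 + u\<^sup>2 \<le> 1 + b\<^sup>2" using assms by (auto intro: power_mono)
  ultimately have "(1 + u\<^sup>2) * \<bar>2 - u * c\<bar> \<le> (1 + b\<^sup>2) * (2 + b * C)"
    by (intro mult_mono) auto
  thus ?thesis by (simp add: abs_mult)
qed

lemma contG_lem: fixes R a b :: real assumes R: "R > 0" and xc: "continuous_on UNIV x"
  shows "continuous_on UNIV (\<lambda>s. (1 + (max a (min b (x s)))\<^sup>2) * (2 - (max a (min b (x s))) * coth (max R s)))"
  proof -
    have cc: "continuous_on UNIV (\<lambda>s. coth (max R s))"
      unfolding continuous_on_eq_continuous_at[OF open_UNIV]
    proof
      fix s :: real
      have "isCont coth (max R s)" using R by (intro coth_cont) auto
      moreover have "isCont (\<lambda>s. max R s) s" by (rule continuous_max continuous_const continuous_ident)+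
      ultimately show "isCont (\<lambda>s. coth (max R s)) s" using isCont_o2 by blast
    qed
    have cx: "continuous_on UNIV (\<lambda>s. max a (min b (x s)))"
      by (rule continuous_on_max continuous_on_min continuous_on_const xc)+
    show ?thesis
      by (rule continuous_on_mult continuous_on_add continuous_on_diff continuous_on_power continuous_on_const cc cx)+
  qed

lemma clamp_lip: fixes a b y z :: real shows "\<bar>max a (min b y) - max a (min b z)\<bar> \<le> \<bar>y - z\<bar>"
  by (simp add: max_def min_def abs_if)



theorem lemma4p1:
  fixes R \<phi>0 :: real
  assumes "R > 0" and "\<phi>0 > 0"
  shows "\<exists>\<phi>. smooth_on_real {R..} \<phi> \<and> translator_ivp R \<phi>0 \<phi> \<and>
           (\<forall>\<psi>. smooth_on_real {R..} \<psi> \<and> translator_ivp R \<phi>0 \<psi> \<longrightarrow>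
                 (\<forall>r\<in>{R..}. \<psi> r = \<phi> r)) \<and>
           (\<phi> \<longlongrightarrow> 2) at_top"
proof -
  note R = assms(1) and p0 = assms(2)
  define C0 where "C0 = coth R"
  have C1: "1 \<le> C0" using coth_ge1[OF R] by (simp add: C0_def)
  have cb: "0 \<le> coth t" "1 \<le> coth t" "coth t \<le> C0" if "t \<ge> R" for t
    using coth_ge1[of t] coth_mono[OF R that] that R by (auto simp: C0_def)
  define a where "a = min \<phi>0 (1 / C0)"
  define b where "b = max \<phi>0 3"
  have a0: "0 < a" using C1 p0 by (simp add: a_def)
  have ab: "a \<le> b" "a \<le> \<phi>0" "\<phi>0 \<le> b" "3 \<le> b" by (auto simp: a_def b_def)
  have aC: "a * c \<le> 1" if "0 \<le> c" "c \<le> C0" for c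
  proof -
    have "a * c \<le> (1 / C0) * C0" using that a0 by (intro mult_mono) (auto simp: a_def)
    thus ?thesis using C1 by simp
  qed
  define F where "F t y = (1 + y\<^sup>2) * (2 - y * coth t)" for t y :: real
  define cl where "cl y = max a (min b y)" for y :: real
  define G where "G s y = F (max R s) (cl y)" for s y :: real
  define L where "L = 4 * b + C0 * (1 + 3 * b\<^sup>2)"
  define M where "M = (1 + b\<^sup>2) * (2 + b * C0)"
  have L0: "L > 0" using ab C1 by (simp add: L_def add_pos_nonneg)
  have clb: "a \<le> cl y" "cl y \<le> b" for y using ab by (auto simp: cl_def)
  have cllip: "\<bar>cl y - cl z\<bar> \<le> \<bar>y - z\<bar>" for y z unfolding cl_def by (rule clamp_lip)
  have Flip: "\<bar>F t y - F t z\<bar> \<le> L * \<bar>y - z\<bar>" if "t \<ge> R" "a \<le> y" "y \<le> b" "a \<le> z" "z \<le> b" for t y z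
    unfolding F_def L_def using that a0 cb[OF that(1)] by (intro poly_lip) auto
  have contG: "continuous_on UNIV (\<lambda>s. G s (x s))" if xc: "continuous_on UNIV x" for x
    unfolding G_def F_def cl_def by (rule contG_lem[OF R xc])
  obtain x where x0: "x R = \<phi>0" and xd: "\<And>t. t \<ge> R \<Longrightarrow> (x has_real_derivative G t (x t)) (at t within {R..})"
  proof -
    have "\<exists>x. x R = \<phi>0 \<and> (\<forall>t\<ge>R. (x has_real_derivative G t (x t)) (at t within {R..}))"
    proof (rule exists_sol[where L=L and M=M])
      show "\<bar>G s y - G s z\<bar> \<le> L * \<bar>y - z\<bar>" for s y z
      proof -
        have Rs: "R \<le> max R s" by simp
        have "\<bar>G s y - G s z\<bar> \<le> L * \<bar>cl y - cl z\<bar>"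
          unfolding G_def by (rule Flip[OF Rs clb clb])
        also have "\<dots> \<le> L * \<bar>y - z\<bar>" using L0 cllip[of y z] by (intro mult_left_mono) auto
        finally show ?thesis .
      qed
      show "\<bar>G s y\<bar> \<le> M" for s y
      proof -
        have Rs: "R \<le> max R s" by simp
        have "0 \<le> cl y" using clb[of y] a0 by linarith
        thus ?thesis unfolding G_def F_def M_def
          by (rule poly_bnd[OF _ clb(2) cb(1)[OF Rs] cb(3)[OF Rs]])
      qed
    qed (use contG L0 in auto)
    thus ?thesis using that by blast
  qed
  have xab: "a \<le> x t \<and> x t \<le> b" if "t \<ge> R" for t
  proof
    show "a \<le> x t"
    proof (rule stay_lower[OF xd _ _ that])
      show "a \<le> x R" using x0 ab by simp
      fix s assume s: "R \<le> s" "x s < a"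
      hence "cl (x s) = a" using ab by (simp add: cl_def)
      moreover have "a * coth s \<le> 1" using aC cb[OF s(1)] by simp
      ultimately show "G s (x s) > 0" using s by (simp add: G_def F_def max_def add_pos_nonneg)
    qed
    show "x t \<le> b"
    proof (rule stay_upper[OF xd _ _ that])
      show "x R \<le> b" using x0 ab by simp
      fix s assume s: "R \<le> s" "x s > b"
      hence "cl (x s) = b" using ab by (simp add: cl_def)
      moreover have "b * 1 \<le> b * coth s" using cb[OF s(1)] ab by (intro mult_left_mono) auto
      hence "2 - b * coth s < 0" using ab by linarith
      hence "(1 + b\<^sup>2) * (2 - b * coth s) < 0" by (intro mult_pos_neg) (auto simp: add_pos_nonneg)
      ultimately show "G s (x s) < 0" using s by (simp add: G_def F_def max_def)
    qed
  qed
  have xd': "(x has_real_derivative F t (x t)) (at t within {R..})" if "t \<ge> R" for t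
  proof -
    have "G t (x t) = F t (x t)" using xab[OF that] that by (simp add: G_def cl_def)
    thus ?thesis using xd[OF that] by simp
  qed
  have ivp: "translator_ivp R \<phi>0 x"
    unfolding translator_ivp_def using x0 xd' by (auto simp: F_def)
  have sm: "smooth_on_real {R..} x"
    by (rule smooth_from_ode[OF R]) (use xd' in \<open>auto simp: F_def\<close>)
  have uniq: "\<forall>r\<in>{R..}. \<psi> r = x r" if "translator_ivp R \<phi>0 \<psi>" for \<psi>
  proof -
    have \<psi>0: "\<psi> R = \<phi>0" and \<psi>d: "\<And>t. t \<ge> R \<Longrightarrow> (\<psi> has_real_derivative F t (\<psi> t)) (at t within {R..})"
      using that unfolding translator_ivp_def F_def by auto
    have \<psi>ab: "a \<le> \<psi> t \<and> \<psi> t \<le> b" if "t \<ge> R" for t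
    proof
      show "a \<le> \<psi> t"
      proof (rule stay_lower[OF \<psi>d _ _ that])
        show "a \<le> \<psi> R" using \<psi>0 ab by simp
        fix s assume s: "R \<le> s" "\<psi> s < a"
        have "\<psi> s * coth s \<le> a * coth s" using s cb[OF s(1)] by (intro mult_right_mono) auto
        moreover have "a * coth s \<le> 1" using aC cb[OF s(1)] by simp
        ultimately show "F s (\<psi> s) > 0" by (simp add: F_def add_pos_nonneg)
      qed
      show "\<psi> t \<le> b"
      proof (rule stay_upper[OF \<psi>d _ _ that])
        show "\<psi> R \<le> b" using \<psi>0 ab by simp
        fix s assume s: "R \<le> s" "\<psi> s > b"
        have "\<psi> s * 1 \<le> \<psi> s * coth s" using cb[OF s(1)] ab s by (intro mult_left_mono) auto
        hence "2 - \<psi> s * coth s < 0" using ab s by linarith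
        hence "(1 + (\<psi> s)\<^sup>2) * (2 - \<psi> s * coth s) < 0" by (intro mult_pos_neg) (auto simp: add_pos_nonneg)
        thus "F s (\<psi> s) < 0" by (simp add: F_def)
      qed
    qed
    show ?thesis
    proof
      fix r assume r: "r \<in> {R..}"
      show "\<psi> r = x r"
      proof (rule uniq_gronwall[OF \<psi>d xd' _ _ _, where L=L])
        show "\<bar>F t (\<psi> t) - F t (x t)\<bar> \<le> L * \<bar>\<psi> t - x t\<bar>" if "t \<ge> R" for t
          using Flip[OF that] \<psi>ab[OF that] xab[OF that] by simp
      qed (use L0 \<psi>0 x0 r in auto)
    qed
  qed
  have lim: "(x \<longlongrightarrow> 2) at_top"
  proof (rule tendstoI)
    fix \<epsilon> :: real assume \<epsilon>: "\<epsilon> > 0"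
    define e where "e = min \<epsilon> 1 / 2"
    have e: "0 < e" "e \<le> 1/2" "e < \<epsilon>" using \<epsilon> by (auto simp: e_def)
    have xat: "(x has_real_derivative F t (x t)) (at t)" if "t \<ge> R + 1" for t
      using xd'[of t] that at_interior_R[of R t] by simp
    have "\<exists>r1. \<forall>t\<ge>r1. x t \<le> 2 + e"
    proof (rule trap_upper[where rs="R+1" and \<eta>=e and lo=a])
      show "F t (x t) \<le> - e" if "t \<ge> R + 1" "x t \<ge> 2 + e" for t
      proof -
        have c: "1 \<le> coth t" using cb[of t] that by simp
        have "x t * 1 \<le> x t * coth t" using c that e by (intro mult_left_mono) auto
        hence n: "2 - x t * coth t \<le> - e" using that by simp
        have "(x t)\<^sup>2 * (2 - x t * coth t) \<le> 0" using n e by (intro mult_nonneg_nonpos) auto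
        thus ?thesis using n unfolding F_def by (simp add: algebra_simps)
      qed
    qed (use xat e xab in auto)
    then obtain r1 where r1: "\<And>t. t \<ge> r1 \<Longrightarrow> x t \<le> 2 + e" by blast
    have "\<forall>\<^sub>F t in at_top. coth t < 1 + e/4"
    proof -
      have "\<forall>\<^sub>F t in at_top. dist (coth t) 1 < e/4" by (rule tendstoD[OF coth_lim]) (use e(1) in simp)
      thus ?thesis
      proof (rule eventually_mono)
        fix t assume "dist (coth t) 1 < e/4"
        hence "\<bar>coth t - 1\<bar> < e/4" by (simp only: dist_real_def)
        hence "coth t - 1 < e/4" using abs_ge_self[of "coth t - 1"] by linarith
        thus "coth t < 1 + e/4" by linarith
      qed
    qed
    then obtain N where N: "\<And>t. t \<ge> N \<Longrightarrow> coth t < 1 + e/4" by (auto simp: eventually_at_top_linorder)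
    have "\<exists>r2. \<forall>t\<ge>r2. x t \<ge> 2 - e"
    proof (rule trap_lower[where rs="max (R+1) N" and \<eta>="e/2" and hi=b])
      show "F t (x t) \<ge> e / 2" if "t \<ge> max (R + 1) N" "x t \<le> 2 - e" for t
      proof -
        have c: "0 \<le> coth t" "coth t \<le> 1 + e/4" using cb[of t] N[of t] that by auto
        have xp: "0 \<le> x t" using xab[of t] a0 that by auto
        have "x t * coth t \<le> (2 - e) * (1 + e/4)" using c xp that e by (intro mult_mono) auto
        also have "\<dots> \<le> 2 - e/2" using e by (simp add: algebra_simps)
        finally have n: "2 - x t * coth t \<ge> e/2" by simp
        have "(x t)\<^sup>2 * (2 - x t * coth t) \<ge> 0" using n e by (intro mult_nonneg_nonneg) auto
        thus ?thesis using n unfolding F_def by (simp add: algebra_simps)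
      qed
    qed (use xat e xab in auto)
    then obtain r2 where r2: "\<And>t. t \<ge> r2 \<Longrightarrow> x t \<ge> 2 - e" by blast
    show "\<forall>\<^sub>F t in at_top. dist (x t) 2 < \<epsilon>"
      unfolding eventually_at_top_linorder
    proof (intro exI[of _ "max r1 r2"] allI impI)
      fix t assume t: "max r1 r2 \<le> t"
      have "x t \<le> 2 + e" "2 - e \<le> x t" using r1[of t] r2[of t] t by auto
      thus "dist (x t) 2 < \<epsilon>" using e unfolding dist_real_def abs_less_iff by linarith
    qed
  qed
  have uniq': "\<forall>\<psi>. smooth_on_real {R..} \<psi> \<and> translator_ivp R \<phi>0 \<psi> \<longrightarrow> (\<forall>r\<in>{R..}. \<psi> r = x r)"
    using uniq by blast
  show ?thesis using sm ivp uniq' lim by blast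
qed

end
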